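(* Let $\alpha,\lambda>0$ and $\beta_1,\beta_2,\beta_3>0$. Let $W_1,W_2,W_3$ be independent continuous random variables with $P(W_i\le w)=(1-e^{-\lambda w^{\alpha}})^{\beta_i}$ for $w>0$, and let $(Z_1,Z_2)=(\max\{W_1,W_3\},\max\{W_2,W_3\})$ (the bivariate continuous exponentiated Weibull distribution with parameters $\alpha,\lambda,\beta_1,\beta_2,\beta_3$). Set $X_i=[Z_i]$, $i=1,2$, where $[z]$ is the largest integer $\le z$, and $p=e^{-\lambda}$. Then $(X_1,X_2)\sim BDEW(\alpha,p,\beta_1,\beta_2,\beta_3)$.
   Context: The exponentiated discrete Weibull distribution $EDW(\alpha,p,\beta)$ ($\alpha,\beta>0$, $0<p<1$) is the distribution on $\mathbb{N}_0=\{0,1,2,\dots\}$ with cumulative distribution function $F_{EDW}(x;\alpha,p,\beta)=[1-p^{([x]+1)^{\alpha}}]^{\beta}$ for real $x\ge 0$. The bivariate discrete exponentiated Weibull distribution $BDEW(\alpha,p,\beta_1,\beta_2,\beta_3)$ is the distribution of $(\max\{V_1,V_3\},\max\{V_2,V_3\})$ where $V_1,V_2,V_3$ are independent with $V_i\sim EDW(\alpha,p,\beta_i)$; equivalently it has joint CDF $F(x_1,x_2)=[1-p^{(x_1+1)^{\alpha}}]^{\beta_1}[1-p^{(x_2+1)^{\alpha}}]^{\beta_2}[1-p^{(\min\{x_1,x_2\}+1)^{\alpha}}]^{\beta_3}$ for $x_1,x_2\in\mathbb{N}_0$. *)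

theory Defs
  imports "HOL-Probability.Probability"
begin

definition bdew_cdf :: "real \<Rightarrow> real \<Rightarrow> real \<Rightarrow> real \<Rightarrow> real \<Rightarrow> nat \<Rightarrow> nat \<Rightarrow> real" where
  "bdew_cdf \<alpha> p \<beta>1 \<beta>2 \<beta>3 x1 x2 =
     (1 - p powr (real (x1 + 1) powr \<alpha>)) powr \<beta>1 *
     (1 - p powr (real (x2 + 1) powr \<alpha>)) powr \<beta>2 *
     (1 - p powr (real (min x1 x2 + 1) powr \<alpha>)) powr \<beta>3"

text \<open>The pair (X1, X2) of integer-valued random variables on M has the BDEW
  distribution: it is almost surely N0 x N0-valued and its joint CDF on N0 x N0
  (which determines a distribution on N0 x N0) is the BDEW joint CDF.\<close>
definition has_BDEW_distribution ::
  "'a measure \<Rightarrow> ('a \<Rightarrow> int) \<Rightarrow> ('a \<Rightarrow> int) \<Rightarrow> real \<Rightarrow> real \<Rightarrow> real \<Rightarrow> real \<Rightarrow> real \<Rightarrow> bool" where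
  "has_BDEW_distribution M X1 X2 \<alpha> p \<beta>1 \<beta>2 \<beta>3 \<longleftrightarrow>
     X1 \<in> measurable M (count_space UNIV) \<and> X2 \<in> measurable M (count_space UNIV) \<and>
     (AE \<omega> in M. 0 \<le> X1 \<omega> \<and> 0 \<le> X2 \<omega>) \<and>
     (\<forall>x1 x2 :: nat. measure M {\<omega> \<in> space M. X1 \<omega> \<le> int x1 \<and> X2 \<omega> \<le> int x2}
                      = bdew_cdf \<alpha> p \<beta>1 \<beta>2 \<beta>3 x1 x2)"

end

theory Submission
  imports Defs
begin

lemma F_left:
  fixes lam \<alpha> b a :: real
  assumes "lam > 0" "\<alpha> > 0" "a > 0"
  shows "((\<lambda>w. (1 - exp (- lam * w powr \<alpha>)) powr b) \<longlongrightarrow> (1 - exp (- lam * a powr \<alpha>)) powr b) (at_left a)"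
proof -
  have "lam * a powr \<alpha> > 0" using assms by simp
  then have "exp (- lam * a powr \<alpha>) < 1" by (simp del: mult_pos_pos mult_minus_left) 
  then have "1 - exp (- lam * a powr \<alpha>) \<noteq> 0" by linarith
  moreover have "((\<lambda>w. w powr \<alpha>) \<longlongrightarrow> a powr \<alpha>) (at_left a)"
    using assms by (intro tendsto_intros) auto
  ultimately show ?thesis
    by (intro tendsto_intros) auto
qed

lemma F_zero:
  fixes lam \<alpha> b :: real
  assumes "lam > 0" "\<alpha> > 0" "b > 0"
  shows "((\<lambda>w. (1 - exp (- lam * w powr \<alpha>)) powr b) \<longlongrightarrow> 0) (at_right 0)"
proof -
  have h0: "eventually (\<lambda>x. 0 \<le> x) (at_right (0::real))"
    by (rule eventually_at_rightI[of 0 1]) auto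
  have "((\<lambda>w. w powr \<alpha>) \<longlongrightarrow> 0) (at_right 0)"
    by (rule tendsto_zero_powrI[OF tendsto_ident_at tendsto_const h0 assms(2)])
  then have "((\<lambda>w. 1 - exp (- lam * w powr \<alpha>)) \<longlongrightarrow> 1 - exp (- lam * 0)) (at_right 0)"
    by (intro tendsto_diff tendsto_const tendsto_exp tendsto_mult)
  then have h1: "((\<lambda>w. 1 - exp (- lam * w powr \<alpha>)) \<longlongrightarrow> 0) (at_right 0)" by simp
  have h2: "((\<lambda>x. b) \<longlongrightarrow> b) (at_right 0)" by simp
  have h3: "\<forall>\<^sub>F x in at_right 0. 0 \<le> 1 - exp (- lam * x powr \<alpha>)"
    using assms by (intro always_eventually) (auto intro: mult_nonneg_nonneg)
  show ?thesis by (rule tendsto_zero_powrI[OF h1 h2 h3 assms(3)])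
qed

lemma cdf_facts:
  fixes lam \<alpha> b :: real and X :: "'a \<Rightarrow> real"
  assumes M: "prob_space M" and X: "X \<in> borel_measurable M"
    and pos: "lam > 0" "\<alpha> > 0" "b > 0"
    and cdf: "\<forall>w>0. measure M {\<omega> \<in> space M. X \<omega> \<le> w} = (1 - exp (- lam * w powr \<alpha>)) powr b"
  shows "measure M {\<omega> \<in> space M. X \<omega> \<le> 0} = 0"
    and "\<And>a. a > 0 \<Longrightarrow> measure M {\<omega> \<in> space M. X \<omega> < a} = (1 - exp (- lam * a powr \<alpha>)) powr b"
proof -
  interpret prob_space M by fact
  let ?F = "\<lambda>w. (1 - exp (- lam * w powr \<alpha>)) powr b"
  have le: "measure M {\<omega> \<in> space M. X \<omega> \<le> 0} \<le> ?F w" if "w > 0" for w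
  proof -
    have "measure M {\<omega> \<in> space M. X \<omega> \<le> 0} \<le> measure M {\<omega> \<in> space M. X \<omega> \<le> w}"
      using that X by (intro finite_measure_mono) auto
    then show ?thesis using cdf that by simp
  qed
  show "measure M {\<omega> \<in> space M. X \<omega> \<le> 0} = 0"
  proof (rule antisym)
    have "eventually (\<lambda>w. measure M {\<omega> \<in> space M. X \<omega> \<le> 0} \<le> ?F w) (at_right 0)"
      by (rule eventually_at_rightI[of 0 1], rule le) auto
    then show "measure M {\<omega> \<in> space M. X \<omega> \<le> 0} \<le> 0"
      by (rule tendsto_lowerbound[OF F_zero[OF pos]]) simp
  qed simp
  fix a :: real assume a: "a > 0"
  show "measure M {\<omega> \<in> space M. X \<omega> < a} = ?F a"
  proof (rule antisym)
    have "measure M {\<omega> \<in> space M. X \<omega> < a} \<le> measure M {\<omega> \<in> space M. X \<omega> \<le> a}"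
      using X by (intro finite_measure_mono) auto
    then show "measure M {\<omega> \<in> space M. X \<omega> < a} \<le> ?F a" using cdf a by simp
    have ge: "?F w \<le> measure M {\<omega> \<in> space M. X \<omega> < a}" if "0 < w" "w < a" for w
    proof -
      have "measure M {\<omega> \<in> space M. X \<omega> \<le> w} \<le> measure M {\<omega> \<in> space M. X \<omega> < a}"
        using X that by (intro finite_measure_mono) auto
      then show ?thesis using cdf that by simp
    qed
    show "?F a \<le> measure M {\<omega> \<in> space M. X \<omega> < a}"
      by (rule tendsto_upperbound[OF F_left[OF pos(1,2) a]])
         (rule eventually_at_leftI[of 0 a], rule ge, auto simp: a)
  qed
qed

lemma exp_powr_neg: "exp (- (lam::real)) powr (t::real) = exp (- lam * t)"
  by (simp add: powr_def mult.commute)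

theorem mainTheorem3:
  fixes M :: "'a measure" and W :: "nat \<Rightarrow> 'a \<Rightarrow> real" and \<beta> :: "nat \<Rightarrow> real"
    and \<alpha> lam :: real
  assumes "prob_space M"
    and "\<alpha> > 0" and "lam > 0" and "\<forall>i\<in>{1,2,3}. \<beta> i > 0"
    and "prob_space.indep_vars M (\<lambda>_. borel) W {1,2,3}"
    and "\<forall>i\<in>{1,2,3}. \<forall>w>0. measure M {\<omega> \<in> space M. W i \<omega> \<le> w}
                               = (1 - exp (- lam * w powr \<alpha>)) powr \<beta> i"
  shows "has_BDEW_distribution M
           (\<lambda>\<omega>. \<lfloor>max (W 1 \<omega>) (W 3 \<omega>)\<rfloor>) (\<lambda>\<omega>. \<lfloor>max (W 2 \<omega>) (W 3 \<omega>)\<rfloor>)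
           \<alpha> (exp (- lam)) (\<beta> 1) (\<beta> 2) (\<beta> 3)"
proof -
  interpret prob_space M by fact
  have ind: "indep_vars (\<lambda>_. borel) W {1,2,3}" using assms(5) by simp
  have mW: "W i \<in> borel_measurable M" if "i \<in> {1,2,3}" for i
    using ind that unfolding indep_vars_def by auto
  have mW1[measurable]: "W 1 \<in> borel_measurable M" using mW by simp
  have mW2[measurable]: "W 2 \<in> borel_measurable M" using mW by simp
  have mW3[measurable]: "W 3 \<in> borel_measurable M" using mW by simp
  have lt: "measure M {\<omega> \<in> space M. W i \<omega> < a} = (1 - exp (- lam * a powr \<alpha>)) powr \<beta> i"
    if "i \<in> {1,2,3}" "a > 0" for i a
    using cdf_facts(2)[OF assms(1) mW[OF that(1)] assms(3,2)] assms(4,6) that by auto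
  have z3: "measure M {\<omega> \<in> space M. W 3 \<omega> \<le> 0} = 0"
    using cdf_facts(1)[OF assms(1) mW3 assms(3,2)] assms(4,6) by auto
  have ae: "AE \<omega> in M. 0 < W 3 \<omega>"
    by (rule AE_I[of _ _ "{\<omega> \<in> space M. W 3 \<omega> \<le> 0}"]) (auto simp: emeasure_eq_measure z3)
  have AE2: "AE \<omega> in M. 0 \<le> \<lfloor>max (W 1 \<omega>) (W 3 \<omega>)\<rfloor> \<and> 0 \<le> \<lfloor>max (W 2 \<omega>) (W 3 \<omega>)\<rfloor>"
    using ae by eventually_elim auto
  have cdf: "measure M {\<omega> \<in> space M. \<lfloor>max (W 1 \<omega>) (W 3 \<omega>)\<rfloor> \<le> int x1 \<and> \<lfloor>max (W 2 \<omega>) (W 3 \<omega>)\<rfloor> \<le> int x2}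
      = bdew_cdf \<alpha> (exp (- lam)) (\<beta> 1) (\<beta> 2) (\<beta> 3) x1 x2" for x1 x2 :: nat
  proof -
    define a where "a = (\<lambda>j::nat. if j = 1 then real (x1 + 1) else if j = 2 then real (x2 + 1)
       else real (min x1 x2 + 1))"
    define A where "A = (\<lambda>j. W j -` {..<a j} \<inter> space M)"
    have "{\<omega> \<in> space M. \<lfloor>max (W 1 \<omega>) (W 3 \<omega>)\<rfloor> \<le> int x1 \<and> \<lfloor>max (W 2 \<omega>) (W 3 \<omega>)\<rfloor> \<le> int x2}
        = (\<Inter>j\<in>{1,2,3}. A j)"
      by (auto simp: A_def a_def floor_le_iff min_def)
    moreover have "prob (\<Inter>j\<in>{1,2,3}. A j) = (\<Prod>j\<in>{1,2,3}. prob (A j))"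
    proof (rule indep_setsD)
      show "indep_sets (\<lambda>i. sigma_sets (space M) {W i -` A \<inter> space M |A. A \<in> sets borel}) {1,2,3::nat}"
        using ind unfolding indep_vars_def by simp
      show "\<forall>j\<in>{1, 2, 3}. A j \<in> sigma_sets (space M) {W j -` A \<inter> space M |A. A \<in> sets borel}"
      proof
        fix j :: nat assume "j \<in> {1,2,3}"
        have "A j \<in> {W j -` B \<inter> space M |B. B \<in> sets borel}"
          unfolding A_def by (rule CollectI, rule exI[of _ "{..<a j}"]) simp
        then show "A j \<in> sigma_sets (space M) {W j -` A \<inter> space M |A. A \<in> sets borel}"
          by (rule sigma_sets.Basic)
      qed
    qed auto
    moreover have "prob (A j) = (1 - exp (- lam * a j powr \<alpha>)) powr \<beta> j" if "j \<in> {1,2,3}" for j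
    proof -
      have "A j = {\<omega> \<in> space M. W j \<omega> < a j}" by (auto simp: A_def)
      moreover have "a j > 0" by (auto simp: a_def)
      ultimately show ?thesis using lt[OF that] by simp
    qed
    ultimately show ?thesis
      by (simp add: bdew_cdf_def exp_powr_neg a_def)
  qed
  have m1: "(\<lambda>\<omega>. \<lfloor>max (W 1 \<omega>) (W 3 \<omega>)\<rfloor>) \<in> measurable M (count_space UNIV)" by measurable
  have m2: "(\<lambda>\<omega>. \<lfloor>max (W 2 \<omega>) (W 3 \<omega>)\<rfloor>) \<in> measurable M (count_space UNIV)" by measurable
  show ?thesis
    unfolding has_BDEW_distribution_def
    using AE2 cdf m1 m2 by blast
qed

end
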